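(* Let $R$ be a hyperring. The following are equivalent: (i) $Spec(R)$ with the Zariski topology is a $T_1$-space; (ii) $\dim(R)=0$, i.e. there are no prime hyperideals $P\subsetneq Q$ of $R$ (equivalently every prime hyperideal is maximal); (iii) $Spec(R)$ is a Hausdorff space.
   Context: Standing conventions. A hyperring means a commutative Krasner hyperring with identity: a set $R$ with a hyperoperation $+:R\times R\to\mathcal P^*(R)$ (nonempty subsets; for subsets $A,B$ one sets $A+B=\bigcup_{a\in A,b\in B}a+b$) and a binary operation $\cdot$ such that: $+$ is associative and commutative; there is $0\in R$ with $0+x=\{x\}$ for all $x$; every $x$ has a unique $-x$ with $0\in x+(-x)$; $z\in x+y$ implies $y\in -x+z$ and $x\in z-y$; $(R,\cdot)$ is a commutative monoid with identity $1$; $0\cdot x=0$; and $x(y+z)=xy+xz$. A hyperideal of $R$ is a nonempty $I\subseteq R$ with $a-b\subseteq I$ and $ra\in I$ for all $a,b\in I$, $r\in R$. A proper hyperideal $P$ is prime if $ab\in P$ implies $a\in P$ or $b\in P$; maximal hyperideals are defined as usual. $Spec(R)$ is the set of prime hyperideals of $R$; for $S\subseteq R$, $V(S)=\{P\in Spec(R): S\subseteq P\}$. The Zariski topology on $Spec(R)$ is the topology whose closed sets are the sets $V(I)$, $I$ a hyperideal of $R$. *)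

theory Defs
  imports "HOL-Analysis.Analysis"
begin

text \<open>A commutative Krasner hyperring with identity, whose underlying set is the
whole type 'a: hyperaddition add, multiplication mul, zero z, identity u.\<close>

definition hsum :: "('a \<Rightarrow> 'a \<Rightarrow> 'a set) \<Rightarrow> 'a set \<Rightarrow> 'a set \<Rightarrow> 'a set" where
  "hsum add A B = (\<Union>a\<in>A. \<Union>b\<in>B. add a b)"

definition hneg :: "('a \<Rightarrow> 'a \<Rightarrow> 'a set) \<Rightarrow> 'a \<Rightarrow> 'a \<Rightarrow> 'a" where
  "hneg add z x = (THE y. z \<in> add x y)"

definition hyperring :: "('a \<Rightarrow> 'a \<Rightarrow> 'a set) \<Rightarrow> ('a \<Rightarrow> 'a \<Rightarrow> 'a) \<Rightarrow> 'a \<Rightarrow> 'a \<Rightarrow> bool" where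
  "hyperring add mul z u \<longleftrightarrow>
     (\<forall>x y. add x y \<noteq> {}) \<and>
     (\<forall>x y w. hsum add (add x y) {w} = hsum add {x} (add y w)) \<and>
     (\<forall>x y. add x y = add y x) \<and>
     (\<forall>x. add z x = {x}) \<and>
     (\<forall>x. \<exists>!y. z \<in> add x y) \<and>
     (\<forall>x y w. w \<in> add x y \<longrightarrow> y \<in> add (hneg add z x) w \<and> x \<in> add w (hneg add z y)) \<and>
     (\<forall>x y w. mul (mul x y) w = mul x (mul y w)) \<and>
     (\<forall>x y. mul x y = mul y x) \<and>
     (\<forall>x. mul u x = x) \<and>
     (\<forall>x. mul z x = z) \<and>
     (\<forall>x y w. mul x ` add y w = add (mul x y) (mul x w))"

definition hyperideal :: "('a \<Rightarrow> 'a \<Rightarrow> 'a set) \<Rightarrow> ('a \<Rightarrow> 'a \<Rightarrow> 'a) \<Rightarrow> 'a \<Rightarrow> 'a set \<Rightarrow> bool" where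
  "hyperideal add mul z I \<longleftrightarrow> I \<noteq> {} \<and>
     (\<forall>a\<in>I. \<forall>b\<in>I. add a (hneg add z b) \<subseteq> I) \<and>
     (\<forall>r. \<forall>a\<in>I. mul r a \<in> I)"

definition prime_hyperideal :: "('a \<Rightarrow> 'a \<Rightarrow> 'a set) \<Rightarrow> ('a \<Rightarrow> 'a \<Rightarrow> 'a) \<Rightarrow> 'a \<Rightarrow> 'a set \<Rightarrow> bool" where
  "prime_hyperideal add mul z P \<longleftrightarrow> hyperideal add mul z P \<and> P \<noteq> UNIV \<and>
     (\<forall>a b. mul a b \<in> P \<longrightarrow> a \<in> P \<or> b \<in> P)"

definition hSpec :: "('a \<Rightarrow> 'a \<Rightarrow> 'a set) \<Rightarrow> ('a \<Rightarrow> 'a \<Rightarrow> 'a) \<Rightarrow> 'a \<Rightarrow> 'a set set" where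
  "hSpec add mul z = {P. prime_hyperideal add mul z P}"

definition hV :: "('a \<Rightarrow> 'a \<Rightarrow> 'a set) \<Rightarrow> ('a \<Rightarrow> 'a \<Rightarrow> 'a) \<Rightarrow> 'a \<Rightarrow> 'a set \<Rightarrow> 'a set set" where
  "hV add mul z S = {P \<in> hSpec add mul z. S \<subseteq> P}"

definition zariski :: "('a \<Rightarrow> 'a \<Rightarrow> 'a set) \<Rightarrow> ('a \<Rightarrow> 'a \<Rightarrow> 'a) \<Rightarrow> 'a \<Rightarrow> 'a set topology" where
  "zariski add mul z = topology (\<lambda>U. \<exists>I. hyperideal add mul z I \<and> U = hSpec add mul z - hV add mul z I)"

definition hdim_zero :: "('a \<Rightarrow> 'a \<Rightarrow> 'a set) \<Rightarrow> ('a \<Rightarrow> 'a \<Rightarrow> 'a) \<Rightarrow> 'a \<Rightarrow> bool" where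
  "hdim_zero add mul z \<longleftrightarrow>
     \<not> (\<exists>P Q. P \<in> hSpec add mul z \<and> Q \<in> hSpec add mul z \<and> P \<subset> Q)"

end

theory Submission
  imports Defs
begin

locale hr =
  fixes add :: "'a \<Rightarrow> 'a \<Rightarrow> 'a set" and mul :: "'a \<Rightarrow> 'a \<Rightarrow> 'a" and z u :: 'a
  assumes H: "hyperring add mul z u"
begin

lemma inv_ex: "\<exists>!y. z \<in> add x y" using H unfolding hyperring_def by (elim conjE) (rule spec)
lemma mul_assoc: "mul (mul x y) w = mul x (mul y w)" using H unfolding hyperring_def by blast
lemma mul_comm: "mul x y = mul y x" using H unfolding hyperring_def by blast
lemma mul_one: "mul u x = x" using H unfolding hyperring_def by blast
lemma mul_zero: "mul z x = z" using H unfolding hyperring_def by blast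
lemma add_zero: "add z x = {x}" using H unfolding hyperring_def by (elim conjE) (rule spec)
lemma mul_lc: "mul x (mul y w) = mul y (mul x w)" by (metis mul_assoc mul_comm)
lemma distr: "mul x ` add y w = add (mul x y) (mul x w)" using H unfolding hyperring_def by blast

lemma hneg_in: "z \<in> add x (hneg add z x)"
  unfolding hneg_def using inv_ex[of x] by (metis theI')

lemma hneg_eq: "z \<in> add x y \<Longrightarrow> hneg add z x = y"
  unfolding hneg_def using inv_ex[of x] by (metis the1_equality)

lemma mul_hneg: "mul b (hneg add z y) = hneg add z (mul b y)"
proof -
  have "mul b z \<in> mul b ` add y (hneg add z y)" using hneg_in by blast
  then have "z \<in> add (mul b y) (mul b (hneg add z y))" using distr mul_zero mul_comm by metis
  then show ?thesis using hneg_eq by metis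
qed

lemma z_in: "hyperideal add mul z I \<Longrightarrow> z \<in> I"
  unfolding hyperideal_def using hneg_in by blast

lemma prime_ideal: "P \<in> hSpec add mul z \<Longrightarrow> hyperideal add mul z P"
  unfolding hSpec_def prime_hyperideal_def by blast

definition hhull :: "'a set \<Rightarrow> 'a set" where
  "hhull S = \<Inter>{J. hyperideal add mul z J \<and> S \<subseteq> J}"

lemma UNIV_ideal: "hyperideal add mul z UNIV" unfolding hyperideal_def by auto

lemma hhull_ideal: "hyperideal add mul z (hhull S)"
proof -
  have "z \<in> hhull S" unfolding hhull_def using z_in by blast
  moreover have "\<forall>a\<in>hhull S. \<forall>b\<in>hhull S. add a (hneg add z b) \<subseteq> hhull S"
    unfolding hhull_def hyperideal_def by blast
  moreover have "\<forall>r. \<forall>a\<in>hhull S. mul r a \<in> hhull S"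
    unfolding hhull_def hyperideal_def by blast
  ultimately show ?thesis unfolding hyperideal_def by blast
qed

lemma V_hhull: "hV add mul z (hhull S) = hV add mul z S"
proof -
  have "S \<subseteq> hhull S" unfolding hhull_def by blast
  moreover have "P \<in> hSpec add mul z \<Longrightarrow> S \<subseteq> P \<Longrightarrow> hhull S \<subseteq> P" for P
    unfolding hhull_def using prime_ideal by blast
  ultimately show ?thesis unfolding hV_def by blast
qed

lemma int_ideal: "hyperideal add mul z I \<Longrightarrow> hyperideal add mul z J \<Longrightarrow> hyperideal add mul z (I \<inter> J)"
  unfolding hyperideal_def using z_in unfolding hyperideal_def by blast

lemma V_int: "hyperideal add mul z I \<Longrightarrow> hyperideal add mul z J \<Longrightarrow>
   hV add mul z (I \<inter> J) = hV add mul z I \<union> hV add mul z J"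
proof -
  assume "hyperideal add mul z I" "hyperideal add mul z J"
  have "I \<subseteq> P \<or> J \<subseteq> P" if "P \<in> hSpec add mul z" "I \<inter> J \<subseteq> P" for P
  proof (rule ccontr)
    assume "\<not> (I \<subseteq> P \<or> J \<subseteq> P)"
    then obtain a b where ab: "a \<in> I" "a \<notin> P" "b \<in> J" "b \<notin> P" by blast
    have "mul a b \<in> I" using ab \<open>hyperideal add mul z I\<close> mul_comm unfolding hyperideal_def by metis
    moreover have "mul a b \<in> J" using ab \<open>hyperideal add mul z J\<close> unfolding hyperideal_def by metis
    ultimately have "mul a b \<in> P" using that by blast
    then show False using that ab unfolding hSpec_def prime_hyperideal_def by blast
  qed
  then show ?thesis unfolding hV_def by blast
qed

definition opn :: "'a set set \<Rightarrow> bool" where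
  "opn U \<longleftrightarrow> (\<exists>I. hyperideal add mul z I \<and> U = hSpec add mul z - hV add mul z I)"

lemma istop: "istopology opn"
  unfolding istopology_def
proof (intro conjI allI impI)
  fix S T assume "opn S" "opn T"
  then obtain I J where "hyperideal add mul z I" "S = hSpec add mul z - hV add mul z I"
    "hyperideal add mul z J" "T = hSpec add mul z - hV add mul z J" unfolding opn_def by blast
  then show "opn (S \<inter> T)" unfolding opn_def
    by (intro exI[of _ "I \<inter> J"]) (auto simp: int_ideal V_int)
next
  fix K assume K: "\<forall>S\<in>K. opn S"
  define S where "S = \<Union>{I. hyperideal add mul z I \<and> (hSpec add mul z - hV add mul z I) \<in> K}"
  have "\<Union>K = hSpec add mul z - hV add mul z S"
  proof
    show "\<Union>K \<subseteq> hSpec add mul z - hV add mul z S"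
    proof
      fix P assume "P \<in> \<Union>K"
      then obtain U where "U \<in> K" "P \<in> U" by blast
      then obtain I where "hyperideal add mul z I" "U = hSpec add mul z - hV add mul z I"
        using K unfolding opn_def by blast
      then show "P \<in> hSpec add mul z - hV add mul z S"
        using \<open>P \<in> U\<close> \<open>U \<in> K\<close> unfolding S_def hV_def by blast
    qed
  next
    show "hSpec add mul z - hV add mul z S \<subseteq> \<Union>K"
      unfolding S_def hV_def by blast
  qed
  then show "opn (\<Union>K)" unfolding opn_def
    by (intro exI[of _ "hhull S"]) (simp add: hhull_ideal V_hhull)
qed

lemma zar_eq: "zariski add mul z = topology opn"
  unfolding zariski_def opn_def[abs_def] by (rule refl)

lemma openin_z: "openin (zariski add mul z) U \<longleftrightarrow> opn U"
  unfolding zar_eq topology_inverse'[OF istop] by (rule refl)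

lemma topspace_z: "topspace (zariski add mul z) = hSpec add mul z"
proof -
  have "hV add mul z UNIV = {}" unfolding hV_def hSpec_def prime_hyperideal_def by blast
  then have o: "opn (hSpec add mul z)" unfolding opn_def using UNIV_ideal
    by (intro exI[of _ UNIV]) simp
  have s: "opn U \<Longrightarrow> U \<subseteq> hSpec add mul z" for U unfolding opn_def by blast
  show ?thesis unfolding topspace_def openin_z
  proof
    show "\<Union> {S. opn S} \<subseteq> hSpec add mul z" using s by blast
    show "hSpec add mul z \<subseteq> \<Union> {S. opn S}" using o by blast
  qed
qed

lemma D_open: "opn {P \<in> hSpec add mul z. x \<notin> P}"
proof -
  have "{P \<in> hSpec add mul z. x \<notin> P} = hSpec add mul z - hV add mul z (hhull {x})"
    using V_hhull[of "{x}"] unfolding hV_def by auto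
  then show ?thesis unfolding opn_def using hhull_ideal by blast
qed

definition pw :: "'a \<Rightarrow> nat \<Rightarrow> 'a" where "pw a n = (mul a ^^ n) u"

lemma pw_add: "mul (pw a n) (pw a m) = pw a (n + m)"
  by (induction n) (auto simp: pw_def mul_one mul_assoc)

lemma pw_prime: "P \<in> hSpec add mul z \<Longrightarrow> pw a n \<in> P \<Longrightarrow> a \<in> P"
proof (induction n)
  case 0
  then have "u \<in> P" by (simp add: pw_def)
  then have "mul r u \<in> P" for r using prime_ideal[OF 0(1)] unfolding hyperideal_def by blast
  then have "P = UNIV" using mul_one mul_comm by (metis UNIV_eq_I)
  then show ?case using 0(1) unfolding hSpec_def prime_hyperideal_def by blast
next
  case (Suc n)
  then have "mul a (pw a n) \<in> P" by (simp add: pw_def)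
  then show ?case using Suc unfolding hSpec_def prime_hyperideal_def by blast
qed

lemma colon_ideal: "hyperideal add mul z J \<Longrightarrow> hyperideal add mul z {x. mul x b \<in> J}"
proof -
  assume J: "hyperideal add mul z J"
  have "z \<in> {x. mul x b \<in> J}" using z_in[OF J] mul_zero by simp
  moreover have "add x (hneg add z y) \<subseteq> {x. mul x b \<in> J}" if "mul x b \<in> J" "mul y b \<in> J" for x y
  proof
    fix w assume "w \<in> add x (hneg add z y)"
    then have "mul b w \<in> add (mul b x) (mul b (hneg add z y))" using distr by blast
    then have "mul b w \<in> add (mul b x) (hneg add z (mul b y))" by (simp add: mul_hneg)
    then have "mul b w \<in> J" using J that mul_comm unfolding hyperideal_def by (metis subsetD)
    then show "w \<in> {x. mul x b \<in> J}" using mul_comm by simp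
  qed
  moreover have "mul r x \<in> {x. mul x b \<in> J}" if "mul x b \<in> J" for r x
    using that J mul_assoc unfolding hyperideal_def by simp
  ultimately show ?thesis unfolding hyperideal_def by blast
qed

lemma exists_prime:
  assumes mc: "\<forall>x\<in>S. \<forall>y\<in>S. mul x y \<in> S" and ne: "S \<noteq> {}" and zS: "z \<notin> S"
  shows "\<exists>J \<in> hSpec add mul z. J \<inter> S = {}"
proof -
  define F where "F = {J. hyperideal add mul z J \<and> J \<inter> S = {}}"
  have zF: "{z} \<in> F"
  proof -
    have zz: "add z z = {z}" by (rule add_zero)
    have "hneg add z z = z" by (rule hneg_eq) (simp add: zz)
    moreover note zz
    ultimately have "hyperideal add mul z {z}" unfolding hyperideal_def
      by (simp add: mul_comm[of _ z] mul_zero)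
    then show ?thesis using zS unfolding F_def by blast
  qed
  have chF: "\<forall>C\<in>chains F. \<exists>U\<in>F. \<forall>X\<in>C. X \<subseteq> U"
  proof
    fix C assume C: "C \<in> chains F"
    show "\<exists>U\<in>F. \<forall>X\<in>C. X \<subseteq> U"
    proof (cases "C = {}")
      case True then show ?thesis using zF by blast
    next
      case False
      have sub: "C \<subseteq> F" and ch: "\<forall>X\<in>C. \<forall>Y\<in>C. X \<subseteq> Y \<or> Y \<subseteq> X"
        using C unfolding chains_def chain_subset_def by auto
      have "hyperideal add mul z (\<Union>C)"
        unfolding hyperideal_def
      proof (intro conjI ballI allI)
        show "\<Union>C \<noteq> {}" using False sub unfolding F_def hyperideal_def by blast
      next
        fix a b assume "a \<in> \<Union>C" "b \<in> \<Union>C"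
        then obtain X Y where XY: "X \<in> C" "Y \<in> C" "a \<in> X" "b \<in> Y" by blast
        then have "(X \<subseteq> Y \<and> a \<in> Y \<and> b \<in> Y) \<or> (Y \<subseteq> X \<and> a \<in> X \<and> b \<in> X)" using ch by blast
        then show "add a (hneg add z b) \<subseteq> \<Union>C"
          using XY sub unfolding F_def hyperideal_def by blast
      next
        fix r a assume "a \<in> \<Union>C"
        then show "mul r a \<in> \<Union>C" using sub unfolding F_def hyperideal_def by blast
      qed
      then have "\<Union>C \<in> F" using sub unfolding F_def by blast
      then show ?thesis by blast
    qed
  qed
  obtain M where MF: "M \<in> F" and Mmax: "\<forall>X\<in>F. M \<subseteq> X \<longrightarrow> X = M"
    using Zorn_Lemma2[OF chF] by blast
  have Mi: "hyperideal add mul z M" and MS: "M \<inter> S = {}" using MF unfolding F_def by auto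
  have col: "\<exists>s\<in>S. mul s b \<in> M" if "c \<notin> M" "mul c b \<in> M" for b c
  proof (rule ccontr)
    assume nn: "\<not> (\<exists>s\<in>S. mul s b \<in> M)"
    let ?X = "{x. mul x b \<in> M}"
    have "?X \<in> F" using colon_ideal[OF Mi] nn unfolding F_def by blast
    moreover have "M \<subseteq> ?X"
    proof
      fix x assume "x \<in> M"
      then have "mul b x \<in> M" using Mi unfolding hyperideal_def by blast
      then show "x \<in> ?X" by (simp add: mul_comm[of x b])
    qed
    ultimately have "?X = M" using Mmax by blast
    then show False using that by blast
  qed
  have "prime_hyperideal add mul z M"
    unfolding prime_hyperideal_def
  proof (intro conjI allI impI)
    show "M \<noteq> UNIV" using MS ne by blast
  next
    fix a b assume ab: "mul a b \<in> M"
    show "a \<in> M \<or> b \<in> M"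
    proof (rule ccontr)
      assume "\<not> (a \<in> M \<or> b \<in> M)"
      then have na: "a \<notin> M" and nb: "b \<notin> M" by auto
      obtain s1 where s1: "s1 \<in> S" "mul s1 b \<in> M" using col[OF na ab] by blast
      have "mul b s1 \<in> M" using s1 mul_comm by metis
      then obtain s2 where s2: "s2 \<in> S" "mul s2 s1 \<in> M" using col[OF nb] by blast
      then show False using mc s1 MS by blast
    qed
  qed (rule Mi)
  then show ?thesis using MS unfolding hSpec_def by blast
qed

lemma nilp:
  assumes d: "hdim_zero add mul z" and P: "P \<in> hSpec add mul z" and a: "a \<in> P"
  shows "\<exists>s n. s \<notin> P \<and> mul s (pw a n) = z"
proof (rule ccontr)
  assume nn: "\<not> ?thesis"
  define S where "S = {mul s (pw a n) | s n. s \<notin> P}"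
  have pr: "\<forall>x y. mul x y \<in> P \<longrightarrow> x \<in> P \<or> y \<in> P" and pU: "P \<noteq> UNIV"
    using P unfolding hSpec_def prime_hyperideal_def by blast+
  have uP: "u \<notin> P"
  proof
    assume "u \<in> P"
    then have "mul r u \<in> P" for r using prime_ideal[OF P] unfolding hyperideal_def by blast
    then show False using pU mul_one mul_comm by (metis UNIV_eq_I)
  qed
  have mc: "\<forall>x\<in>S. \<forall>y\<in>S. mul x y \<in> S"
  proof (intro ballI)
    fix x y assume "x \<in> S" "y \<in> S"
    then obtain s n t m where st: "x = mul s (pw a n)" "s \<notin> P" "y = mul t (pw a m)" "t \<notin> P"
      unfolding S_def by blast
    have "mul x y = mul (mul s t) (mul (pw a n) (pw a m))"
      unfolding st(1,3) mul_assoc by (simp add: mul_lc)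
    also have "\<dots> = mul (mul s t) (pw a (n+m))" by (simp add: pw_add)
    finally show "mul x y \<in> S" unfolding S_def using st pr by blast
  qed
  have xS: "x \<notin> P \<Longrightarrow> x \<in> S" for x
  proof -
    assume "x \<notin> P"
    moreover have "x = mul x (pw a 0)" unfolding pw_def funpow_0 by (metis mul_comm mul_one)
    ultimately show ?thesis unfolding S_def by blast
  qed
  have "z \<notin> S" using nn unfolding S_def by blast
  moreover have "S \<noteq> {}" using xS uP by blast
  ultimately obtain J where J: "J \<in> hSpec add mul z" "J \<inter> S = {}" using exists_prime[OF mc] by blast
  have "J \<subseteq> P" using J xS by blast
  moreover have "a \<in> S" unfolding S_def
    by (rule CollectI, rule exI[of _ u], rule exI[of _ 1]) (simp add: pw_def mul_comm[of a u] mul_one uP)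
  then have "a \<notin> J" using J by blast
  ultimately have "J \<subset> P" using a by blast
  then show False using d J P unfolding hdim_zero_def by blast
qed

end

theorem mainTheorem9:
  fixes add :: "'a \<Rightarrow> 'a \<Rightarrow> 'a set" and mul :: "'a \<Rightarrow> 'a \<Rightarrow> 'a" and z u :: 'a
  assumes "hyperring add mul z u"
  shows "(t1_space (zariski add mul z) \<longleftrightarrow> hdim_zero add mul z) \<and>
         (hdim_zero add mul z \<longleftrightarrow> Hausdorff_space (zariski add mul z))"
proof -
  interpret hr add mul z u using assms by unfold_locales
  have A: "t1_space (zariski add mul z) \<Longrightarrow> hdim_zero add mul z"
    unfolding hdim_zero_def
  proof
    assume t1: "t1_space (zariski add mul z)"
    assume "\<exists>P Q. P \<in> hSpec add mul z \<and> Q \<in> hSpec add mul z \<and> P \<subset> Q"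
    then obtain P Q where PQ: "P \<in> hSpec add mul z" "Q \<in> hSpec add mul z" "P \<subset> Q" by blast
    then obtain U where "opn U" "Q \<in> U" "P \<notin> U"
      using t1 unfolding t1_space_def topspace_z openin_z by blast
    then obtain I where "U = hSpec add mul z - hV add mul z I" unfolding opn_def by blast
    then show False using PQ \<open>Q \<in> U\<close> \<open>P \<notin> U\<close> unfolding hV_def by blast
  qed
  have B: "hdim_zero add mul z \<Longrightarrow> Hausdorff_space (zariski add mul z)"
    unfolding Hausdorff_space_def topspace_z openin_z
  proof (intro allI impI)
    fix P Q assume d: "hdim_zero add mul z" and PQ: "P \<in> hSpec add mul z \<and> Q \<in> hSpec add mul z \<and> P \<noteq> Q"
    then obtain a where a: "a \<in> P" "a \<notin> Q" unfolding hdim_zero_def by blast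
    obtain s n where sn: "s \<notin> P" "mul s (pw a n) = z" using nilp[OF d _ a(1)] PQ by blast
    have nR: False if R: "R \<in> hSpec add mul z" "s \<notin> R" "a \<notin> R" for R
    proof -
      have "z \<in> R" using z_in[OF prime_ideal[OF R(1)]] .
      then have "mul s (pw a n) \<in> R" using sn(2) by simp
      then have "s \<in> R \<or> pw a n \<in> R" using R(1) unfolding hSpec_def prime_hyperideal_def by blast
      then show False using R pw_prime by blast
    qed
    have dj: "disjnt {R \<in> hSpec add mul z. s \<notin> R} {R \<in> hSpec add mul z. a \<notin> R}"
      unfolding disjnt_def using nR by blast
    show "\<exists>U V. opn U \<and> opn V \<and> P \<in> U \<and> Q \<in> V \<and> disjnt U V"
      apply (rule exI[of _ "{R \<in> hSpec add mul z. s \<notin> R}"])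
      apply (rule exI[of _ "{R \<in> hSpec add mul z. a \<notin> R}"])
      using D_open PQ sn(1) a(2) dj by blast
  qed
  have C: "hdim_zero add mul z \<Longrightarrow> t1_space (zariski add mul z)"
    using B Hausdorff_imp_t1_space by blast
  have D: "Hausdorff_space (zariski add mul z) \<Longrightarrow> hdim_zero add mul z"
    using A Hausdorff_imp_t1_space by blast
  show ?thesis using A B C D by blast
qed

end
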